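(* Let $E$ be a finite set and let $\mathcal{Q}\subseteq 2^E$ be a weakly Rayleigh set-system. Then $\mathcal{Q}$ is a convex delta-matroid.
   Context: For a function $\omega:2^E\to[0,\infty)$, not identically zero, let $\mathbf{y}=\{y_e: e\in E\}$ be commuting indeterminates, $\mathbf{y}^S=\prod_{e\in S}y_e$, and $Z(\omega;\mathbf{y})=\sum_{S\subseteq E}\omega(S)\mathbf{y}^S$. For a multiaffine polynomial $Z$ write $Z^e=Z|_{y_e=0}$, $Z_e=\partial Z/\partial y_e$, $Z_{ef}=\partial^2 Z/\partial y_e\partial y_f$, and $\Delta Z\{e,f\}=Z_eZ_f-Z_{ef}Z$. $Z$ (or $\omega$) is Rayleigh if $\Delta Z\{e,f\}(\mathbf{y})\ge 0$ for all distinct $e,f\in E$ and all $\mathbf{y}$ with every $y_c>0$ (equivalently, under the probability measure $\mu(S)\propto\omega(S)\mathbf{y}^S$, the indicator variables of $e\in S$ and $f\in S$ have nonpositive covariance). The support is $\mathrm{Supp}(\omega)=\{S:\omega(S)>0\}$. A set-system $\mathcal{Q}\subseteq 2^E$ is weakly Rayleigh if there is a nonnegative $\omega$ with $\mathrm{Supp}(\omega)=\mathcal{Q}$ and $Z(\omega;\mathbf{y})$ Rayleigh. $\mathcal{Q}$ is convex if $S\subseteq T\subseteq S'$ with $S,S'\in\mathcal{Q}$ implies $T\in\mathcal{Q}$. $\mathcal{Q}$ is a delta-matroid if for all $A,B\in\mathcal{Q}$ and $e\in A\triangle B$ there is $f\in A\triangle B$ (possibly $f=e$) with $A\triangle\{e,f\}\in\mathcal{Q}$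 ($\triangle$ = symmetric difference). *)

theory Defs
  imports "HOL-Analysis.Analysis"
begin

definition Zpoly :: "'a set \<Rightarrow> ('a set \<Rightarrow> real) \<Rightarrow> ('a \<Rightarrow> real) \<Rightarrow> real" where
  "Zpoly E \<omega> y = (\<Sum>S\<in>Pow E. \<omega> S * (\<Prod>e\<in>S. y e))"

definition pderiv_var :: "'a \<Rightarrow> (('a \<Rightarrow> real) \<Rightarrow> real) \<Rightarrow> ('a \<Rightarrow> real) \<Rightarrow> real" where
  "pderiv_var e F y = deriv (\<lambda>t. F (y(e := t))) (y e)"

definition rayleigh_diff :: "'a set \<Rightarrow> ('a set \<Rightarrow> real) \<Rightarrow> 'a \<Rightarrow> 'a \<Rightarrow> ('a \<Rightarrow> real) \<Rightarrow> real" where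
  "rayleigh_diff E \<omega> e f y =
     pderiv_var e (Zpoly E \<omega>) y * pderiv_var f (Zpoly E \<omega>) y
     - pderiv_var e (pderiv_var f (Zpoly E \<omega>)) y * Zpoly E \<omega> y"

definition rayleigh :: "'a set \<Rightarrow> ('a set \<Rightarrow> real) \<Rightarrow> bool" where
  "rayleigh E \<omega> \<longleftrightarrow>
     (\<forall>e\<in>E. \<forall>f\<in>E. e \<noteq> f \<longrightarrow>
        (\<forall>y. (\<forall>c\<in>E. y c > 0) \<longrightarrow> rayleigh_diff E \<omega> e f y \<ge> 0))"

definition support :: "'a set \<Rightarrow> ('a set \<Rightarrow> real) \<Rightarrow> 'a set set" where
  "support E \<omega> = {S\<in>Pow E. \<omega> S > 0}"

text \<open>omega : 2^E -> [0,inf), not identically zero; only its values on Pow E matter.\<close>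
definition weakly_rayleigh :: "'a set \<Rightarrow> 'a set set \<Rightarrow> bool" where
  "weakly_rayleigh E Q \<longleftrightarrow>
     (\<exists>\<omega>. (\<forall>S\<in>Pow E. \<omega> S \<ge> 0) \<and> (\<exists>S\<in>Pow E. \<omega> S \<noteq> 0)
          \<and> support E \<omega> = Q \<and> rayleigh E \<omega>)"

definition convex_setsystem :: "'a set set \<Rightarrow> bool" where
  "convex_setsystem Q \<longleftrightarrow>
     (\<forall>S\<in>Q. \<forall>S'\<in>Q. \<forall>T. S \<subseteq> T \<and> T \<subseteq> S' \<longrightarrow> T \<in> Q)"

definition symdiff :: "'a set \<Rightarrow> 'a set \<Rightarrow> 'a set" where
  "symdiff A B = (A - B) \<union> (B - A)"

definition delta_matroid :: "'a set set \<Rightarrow> bool" where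
  "delta_matroid Q \<longleftrightarrow>
     (\<forall>A\<in>Q. \<forall>B\<in>Q. \<forall>e\<in>symdiff A B. \<exists>f\<in>symdiff A B. symdiff A {e, f} \<in> Q)"

end

theory Submission
  imports Defs
begin


lemma Zpoly_upd_out:
  assumes "e \<notin> F"
  shows "Zpoly F \<omega> (y(e := t)) = Zpoly F \<omega> y"
  unfolding Zpoly_def
proof (rule sum.cong[OF refl])
  fix S assume "S \<in> Pow F"
  then have "e \<notin> S" using assms by auto
  then show "\<omega> S * prod (y(e := t)) S = \<omega> S * prod y S"
    by (metis (no_types, lifting) fun_upd_other prod.cong)
qed

lemma Zpoly_insert:
  assumes "finite F" "e \<notin> F"
  shows "Zpoly (insert e F) \<omega> y = Zpoly F \<omega> y + y e * Zpoly F (\<lambda>S. \<omega> (insert e S)) y"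
proof -
  have inj: "inj_on (insert e) (Pow F)"
    using assms(2) unfolding inj_on_def by (metis Pow_iff insert_absorb insert_ident subsetD)
  have disj: "Pow F \<inter> insert e ` Pow F = {}" using assms(2) by auto
  have fin: "finite (Pow F)" using assms(1) by simp
  have "Zpoly (insert e F) \<omega> y = (\<Sum>S\<in>Pow F. \<omega> S * prod y S) + (\<Sum>S\<in>insert e ` Pow F. \<omega> S * prod y S)"
    unfolding Zpoly_def Pow_insert using fin disj by (simp add: sum.union_disjoint)
  also have "(\<Sum>S\<in>insert e ` Pow F. \<omega> S * prod y S) = (\<Sum>S\<in>Pow F. \<omega> (insert e S) * prod y (insert e S))"
    using inj by (simp add: sum.reindex)
  also have "\<dots> = (\<Sum>S\<in>Pow F. y e * (\<omega> (insert e S) * prod y S))"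
  proof (rule sum.cong[OF refl])
    fix S assume "S \<in> Pow F"
    then have "e \<notin> S" "finite S" using assms finite_subset by auto
    then show "\<omega> (insert e S) * prod y (insert e S) = y e * (\<omega> (insert e S) * prod y S)" by simp
  qed
  finally show ?thesis unfolding Zpoly_def by (simp add: sum_distrib_left)
qed

lemma pderiv_Zpoly:
  assumes "finite E" "e \<in> E"
  shows "pderiv_var e (Zpoly E \<omega>) y = Zpoly (E - {e}) (\<lambda>S. \<omega> (insert e S)) y"
proof -
  let ?F = "E - {e}"
  have E: "E = insert e ?F" using assms by auto
  have fin: "finite ?F" using assms by simp
  have "(\<lambda>t. Zpoly E \<omega> (y(e := t))) = (\<lambda>t. Zpoly ?F \<omega> y + t * Zpoly ?F (\<lambda>S. \<omega> (insert e S)) y)"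
  proof
    fix t
    have "Zpoly E \<omega> (y(e := t)) = Zpoly ?F \<omega> (y(e := t)) + (y(e := t)) e * Zpoly ?F (\<lambda>S. \<omega> (insert e S)) (y(e := t))"
      by (subst E, rule Zpoly_insert[OF fin]) simp
    then show "Zpoly E \<omega> (y(e := t)) = Zpoly ?F \<omega> y + t * Zpoly ?F (\<lambda>S. \<omega> (insert e S)) y"
      by (simp add: Zpoly_upd_out)
  qed
  moreover have "deriv (\<lambda>t. Zpoly ?F \<omega> y + t * Zpoly ?F (\<lambda>S. \<omega> (insert e S)) y) (y e) = Zpoly ?F (\<lambda>S. \<omega> (insert e S)) y"
    by (rule DERIV_imp_deriv) (auto intro!: derivative_eq_intros)
  ultimately show ?thesis unfolding pderiv_var_def by simp
qed

lemma rayleigh_diff_formula: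
  assumes "finite E" "e \<in> E" "f \<in> E" "e \<noteq> f"
  shows "rayleigh_diff E \<omega> e f y =
    Zpoly (E - {e, f}) (\<lambda>S. \<omega> (insert e S)) y * Zpoly (E - {e, f}) (\<lambda>S. \<omega> (insert f S)) y
    - Zpoly (E - {e, f}) \<omega> y * Zpoly (E - {e, f}) (\<lambda>S. \<omega> (insert e (insert f S))) y"
proof -
  let ?F = "E - {e, f}"
  have finF: "finite ?F" using assms by simp
  have E1: "E = insert e (insert f ?F)" and E2: "E - {e} = insert f ?F" and E3: "E - {f} = insert e ?F"
    and E4: "E - {f} - {e} = ?F"
    using assms by auto
  have nf: "f \<notin> ?F" "e \<notin> ?F" "e \<notin> insert f ?F" using assms by auto
  define A where "A = Zpoly ?F \<omega> y"
  define B where "B = Zpoly ?F (\<lambda>S. \<omega> (insert e S)) y"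
  define C where "C = Zpoly ?F (\<lambda>S. \<omega> (insert f S)) y"
  define D where "D = Zpoly ?F (\<lambda>S. \<omega> (insert e (insert f S))) y"
  have Z: "Zpoly E \<omega> y = A + y f * C + y e * (B + y f * D)"
    unfolding A_def B_def C_def D_def
    by (subst E1, simp only: Zpoly_insert[OF _ nf(3)] finF finite_insert Zpoly_insert[OF finF nf(1)])
  have Ze: "pderiv_var e (Zpoly E \<omega>) y = B + y f * D"
    unfolding B_def D_def
    by (simp only: pderiv_Zpoly[OF assms(1,2)] E2 Zpoly_insert[OF finF nf(1)])
  have Zf: "pderiv_var f (Zpoly E \<omega>) y = C + y e * D"
    unfolding C_def D_def
    by (simp only: pderiv_Zpoly[OF assms(1,3)] E3 Zpoly_insert[OF finF nf(2)] insert_commute)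
  have Zfe: "pderiv_var e (pderiv_var f (Zpoly E \<omega>)) y = D"
  proof -
    have "pderiv_var f (Zpoly E \<omega>) = Zpoly (E - {f}) (\<lambda>S. \<omega> (insert f S))"
      using pderiv_Zpoly[OF assms(1,3)] by blast
    then show ?thesis unfolding D_def
      using pderiv_Zpoly[of "E - {f}" e "\<lambda>S. \<omega> (insert f S)" y] assms
      by (simp add: E4 insert_commute)
  qed
  show ?thesis unfolding rayleigh_diff_def Z Ze Zf Zfe
    by (fold A_def B_def C_def D_def) (simp add: algebra_simps)
qed



lemma dominate:
  fixes P N w :: "'b \<Rightarrow> real"
  assumes fin: "finite D" and Pnn: "\<forall>p\<in>D. P p \<ge> 0" and Nnn: "\<forall>p\<in>D. N p \<ge> 0"
    and p0: "p0 \<in> D" "N p0 > 0" and dom: "\<forall>p\<in>D. P p > 0 \<longrightarrow> w p < w p0"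
  shows "\<exists>t>0. (\<Sum>p\<in>D. (P p - N p) * t powr w p) < 0"
proof -
  define M where "M = Max (insert (w p0 - 1) (w ` {p\<in>D. P p > 0}))"
  have finM: "finite (insert (w p0 - 1) (w ` {p\<in>D. P p > 0}))" using fin by simp
  have Mlt: "M < w p0"
    unfolding M_def using finM dom by (subst Max_less_iff) auto
  have Mge: "w p \<le> M" if "p \<in> D" "P p > 0" for p
    unfolding M_def using finM that by (intro Max_ge) auto
  define SP where "SP = (\<Sum>p\<in>D. P p)"
  have SPnn: "SP \<ge> 0" unfolding SP_def using Pnn by (simp add: sum_nonneg)
  define \<delta> where "\<delta> = w p0 - M"
  have dpos: "\<delta> > 0" using Mlt \<delta>_def by simp
  define t where "t = max 1 ((SP / N p0 + 1) powr (1 / \<delta>))"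
  have t1: "t \<ge> 1" unfolding t_def by simp
  have tpos: "t > 0" using t1 by simp
  have "t powr \<delta> \<ge> ((SP / N p0 + 1) powr (1 / \<delta>)) powr \<delta>"
    unfolding t_def by (rule powr_mono2) (use dpos in auto)
  also have "((SP / N p0 + 1) powr (1 / \<delta>)) powr \<delta> = SP / N p0 + 1"
    using dpos SPnn p0 by (simp add: powr_powr)
  finally have tdel: "t powr \<delta> \<ge> SP / N p0 + 1" .
  have sP: "(\<Sum>p\<in>D. P p * t powr w p) \<le> (\<Sum>p\<in>D. P p * t powr M)"
  proof (rule sum_mono)
    fix p assume "p \<in> D"
    show "P p * t powr w p \<le> P p * t powr M"
    proof (cases "P p > 0")
      case True
      then show ?thesis using Mge[OF \<open>p \<in> D\<close> True] t1 by (intro mult_left_mono powr_mono) auto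
    next
      case False
      then have "P p = 0" using Pnn \<open>p \<in> D\<close> by force
      then show ?thesis by simp
    qed
  qed
  also have "\<dots> = SP * t powr M" unfolding SP_def by (simp add: sum_distrib_right)
  finally have sP': "(\<Sum>p\<in>D. P p * t powr w p) \<le> SP * t powr M" .
  have sN: "N p0 * t powr w p0 \<le> (\<Sum>p\<in>D. N p * t powr w p)"
    using fin p0(1) Nnn by (intro member_le_sum) auto
  have "SP * t powr M < N p0 * t powr w p0"
  proof -
    have "w p0 = M + \<delta>" unfolding \<delta>_def by simp
    then have e: "t powr w p0 = t powr M * t powr \<delta>" by (simp add: powr_add)
    have "SP < N p0 * t powr \<delta>"
    proof -
      have "SP < N p0 * (SP / N p0 + 1)" using p0(2) by (simp add: field_simps)
      also have "\<dots> \<le> N p0 * t powr \<delta>" using tdel p0(2) by simp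
      finally show ?thesis .
    qed
    then have "SP * t powr M < (N p0 * t powr \<delta>) * t powr M" using tpos by simp
    then show ?thesis using e by (simp add: algebra_simps)
  qed
  then have "(\<Sum>p\<in>D. P p * t powr w p) < (\<Sum>p\<in>D. N p * t powr w p)" using sP' sN by linarith
  then have "(\<Sum>p\<in>D. (P p - N p) * t powr w p) < 0"
    by (simp add: left_diff_distrib sum_subtractf)
  then show ?thesis using tpos by blast
qed

definition cost :: "'a set \<Rightarrow> 'a set \<Rightarrow> ('a \<Rightarrow> nat) \<Rightarrow> 'a set \<Rightarrow> nat" where
  "cost F R m Z = (\<Sum>c\<in>F. if (c \<in> Z) = (c \<in> R) then 0 else m c)"

lemma sigma_sum:
  assumes "finite F" "Z \<subseteq> F"
  shows "(\<Sum>c\<in>Z. (if c \<in> F then (if c \<in> R then real (m c) else - real (m c)) else 0))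
     = (\<Sum>c\<in>F. if c \<in> R then real (m c) else 0) - real (cost F R m Z)"
proof -
  have "(\<Sum>c\<in>Z. (if c \<in> F then (if c \<in> R then real (m c) else - real (m c)) else 0))
      = (\<Sum>c\<in>F. if c \<in> Z then (if c \<in> R then real (m c) else - real (m c)) else 0)"
    using assms by (intro sum.mono_neutral_cong_left) auto
  also have "\<dots> = (\<Sum>c\<in>F. (if c \<in> R then real (m c) else 0) - real (if (c \<in> Z) = (c \<in> R) then 0 else m c))"
    by (rule sum.cong) auto
  finally show ?thesis unfolding cost_def by (simp add: sum_subtractf)
qed

lemma key:
  assumes finE: "finite E" and nn: "\<forall>S\<in>Pow E. \<omega> S \<ge> 0" and ray: "rayleigh E \<omega>"
    and pq: "p \<in> E" "q \<in> E" "p \<noteq> q"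
    and X: "X \<subseteq> E - {p, q}" "\<omega> X > 0"
    and Y: "Y \<subseteq> E - {p, q}" "\<omega> (insert p (insert q Y)) > 0"
  shows "\<exists>U V. U \<subseteq> E - {p, q} \<and> V \<subseteq> E - {p, q} \<and> \<omega> (insert p U) > 0 \<and> \<omega> (insert q V) > 0
     \<and> cost (E - {p, q}) R m U + cost (E - {p, q}) R m V \<le> cost (E - {p, q}) R m X + cost (E - {p, q}) R m Y"
proof (rule ccontr)
  let ?F = "E - {p, q}"
  let ?c = "cost ?F R m"
  assume contra: "\<not> ?thesis"
  have finF: "finite ?F" using finE by simp
  define \<sigma> where "\<sigma> c = (if c \<in> ?F then (if c \<in> R then real (m c) else - real (m c)) else 0)" for c
  define K where "K = (\<Sum>c\<in>?F. if c \<in> R then real (m c) else 0)"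
  define D where "D = Pow ?F \<times> Pow ?F"
  define P where "P uv = \<omega> (insert p (fst uv)) * \<omega> (insert q (snd uv))" for uv
  define N where "N uv = \<omega> (fst uv) * \<omega> (insert p (insert q (snd uv)))" for uv
  define w where "w uv = 2 * K - real (?c (fst uv)) - real (?c (snd uv))" for uv
  have finD: "finite D" unfolding D_def using finF by simp
  have Pnn: "\<forall>uv\<in>D. P uv \<ge> 0" unfolding D_def P_def using nn pq by (auto intro!: mult_nonneg_nonneg)
  have Nnn: "\<forall>uv\<in>D. N uv \<ge> 0" unfolding D_def N_def using nn pq by (auto intro!: mult_nonneg_nonneg)
  have p0: "(X, Y) \<in> D" "N (X, Y) > 0" unfolding D_def N_def using X Y by auto
  have dom: "\<forall>uv\<in>D. P uv > 0 \<longrightarrow> w uv < w (X, Y)"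
  proof (intro ballI impI)
    fix uv assume uv: "uv \<in> D" "P uv > 0"
    obtain U V where uvd: "uv = (U, V)" by fastforce
    have sub: "U \<subseteq> ?F" "V \<subseteq> ?F" using uv uvd D_def by auto
    have ge: "\<omega> (insert p U) \<ge> 0" "\<omega> (insert q V) \<ge> 0" using nn sub pq by auto
    have "\<omega> (insert p U) > 0 \<and> \<omega> (insert q V) > 0"
    proof (rule ccontr)
      assume "\<not> ?thesis"
      then have "\<omega> (insert p U) = 0 \<or> \<omega> (insert q V) = 0" using ge by linarith
      then show False using uv uvd P_def by auto
    qed
    then have "\<not> (?c U + ?c V \<le> ?c X + ?c Y)" using contra sub by blast
    then show "w uv < w (X, Y)" unfolding w_def uvd by simp
  qed
  obtain t where t: "t > 0" "(\<Sum>uv\<in>D. (P uv - N uv) * t powr w uv) < 0"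
    using dominate[OF finD Pnn Nnn p0 dom] by blast
  define y where "y c = t powr \<sigma> c" for c
  have ypos: "\<forall>c\<in>E. y c > 0" unfolding y_def using t by simp
  have prody: "prod y Z = t powr (K - real (?c Z))" if "Z \<subseteq> ?F" for Z
  proof -
    have "prod y Z = t powr (sum \<sigma> Z)" unfolding y_def using t by (simp add: powr_sum)
    also have "sum \<sigma> Z = K - real (?c Z)" unfolding \<sigma>_def K_def using sigma_sum[OF finF that] by simp
    finally show ?thesis .
  qed
  have Zp: "Zpoly ?F g y = (\<Sum>U\<in>Pow ?F. g U * t powr (K - real (?c U)))" for g
    unfolding Zpoly_def using prody by (intro sum.cong) auto
  have "rayleigh_diff E \<omega> p q y = (\<Sum>uv\<in>D. (P uv - N uv) * t powr w uv)"
  proof -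
    have pw: "t powr (K - real (?c U)) * t powr (K - real (?c V)) = t powr w (U, V)" for U V
      unfolding w_def by (simp add: powr_add[symmetric] algebra_simps)
    have "rayleigh_diff E \<omega> p q y =
      (\<Sum>U\<in>Pow ?F. \<Sum>V\<in>Pow ?F. \<omega> (insert p U) * \<omega> (insert q V) * t powr w (U, V))
      - (\<Sum>U\<in>Pow ?F. \<Sum>V\<in>Pow ?F. \<omega> U * \<omega> (insert p (insert q V)) * t powr w (U, V))"
      unfolding rayleigh_diff_formula[OF finE pq] Zp sum_product
      by (simp add: pw[symmetric] algebra_simps)
    also have "\<dots> = (\<Sum>uv\<in>D. P uv * t powr w uv) - (\<Sum>uv\<in>D. N uv * t powr w uv)"
      unfolding D_def P_def N_def sum.cartesian_product by (simp add: case_prod_beta)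
    also have "\<dots> = (\<Sum>uv\<in>D. (P uv - N uv) * t powr w uv)"
      by (simp add: left_diff_distrib sum_subtractf)
    finally show ?thesis .
  qed
  moreover have "rayleigh_diff E \<omega> p q y \<ge> 0"
    using ray pq ypos unfolding rayleigh_def by blast
  ultimately show False using t by simp
qed



lemma cost_nonneg_term:
  assumes "finite F" "c \<in> F"
  shows "(if (c \<in> Z) = (c \<in> R) then 0 else m c) \<le> cost F R m Z"
  unfolding cost_def using assms by (intro member_le_sum) auto

lemma cost_minus:
  assumes "F \<inter> {p, q} = {}"
  shows "cost F R m (W - {p, q}) = cost F R m W"
  unfolding cost_def using assms by (intro sum.cong) auto

lemma card_symdiff_insert:
  assumes finE: "finite E" and F: "F = E - {p, q}" and pq: "p \<in> E" "q \<in> E" "p \<noteq> q"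
    and W: "W \<subseteq> F" and A: "A \<subseteq> E" and side: "(p \<in> A) = (q \<in> A)"
  shows "card (symdiff A (insert p W)) = 1 + (\<Sum>c\<in>F. of_bool ((c \<in> W) \<noteq> (c \<in> A)))"
proof -
  have finF: "finite F" using finE F by simp
  have "symdiff A (insert p W) = E \<inter> {c. (c \<in> insert p W) \<noteq> (c \<in> A)}"
    using W A pq F unfolding symdiff_def by auto
  then have "card (symdiff A (insert p W)) = (\<Sum>c\<in>E. of_bool ((c \<in> insert p W) \<noteq> (c \<in> A)))"
    using finE by simp
  also have "E = insert p (insert q F)" using F pq by auto
  also have "(\<Sum>c\<in>insert p (insert q F). of_bool ((c \<in> insert p W) \<noteq> (c \<in> A)) :: nat)
     = of_bool (p \<notin> A) + of_bool ((q \<in> W) \<noteq> (q \<in> A)) + (\<Sum>c\<in>F. of_bool ((c \<in> insert p W) \<noteq> (c \<in> A)))"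
    using finF F pq by (simp del: sum_of_bool_eq)
  also have "(\<Sum>c\<in>F. of_bool ((c \<in> insert p W) \<noteq> (c \<in> A)) :: nat) = (\<Sum>c\<in>F. of_bool ((c \<in> W) \<noteq> (c \<in> A)))"
    using F by (intro sum.cong) auto
  finally have "card (symdiff A (insert p W)) = of_bool (p \<notin> A) + of_bool ((q \<in> W) \<noteq> (q \<in> A)) + (\<Sum>c\<in>F. of_bool ((c \<in> W) \<noteq> (c \<in> A)))" .
  moreover have "q \<notin> W" using W F by auto
  ultimately show ?thesis using side by (auto simp del: sum_of_bool_eq)
qed



lemma reduce:
  assumes finE: "finite E" and nn: "\<forall>S\<in>Pow E. \<omega> S \<ge> 0" and ray: "rayleigh E \<omega>"
    and Qdef: "\<And>Z. Z \<in> Q \<longleftrightarrow> Z \<subseteq> E \<and> \<omega> Z > 0"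
    and AB: "A \<in> Q" "B \<in> Q" and Dd: "D = symdiff A B" and nd: "n = card D" and n3: "n \<ge> 3"
    and eD: "e \<in> D" and pq: "p \<in> D" "q \<in> D" "p \<noteq> q" and side: "(p \<in> A) = (q \<in> A)"
    and lab: "e \<in> {p, q} \<longrightarrow> (p = e \<longleftrightarrow> e \<notin> A)"
  shows "\<exists>Z\<in>Q. (\<forall>c\<in>E - D. (c \<in> Z) = (c \<in> A)) \<and> e \<in> symdiff A Z \<and> card (symdiff A Z) < n"
proof -
  define F where "F = E - {p, q}"
  define R where "R = symdiff A {e}"
  define m where "m c = (if c \<notin> D then 2 * n else if c = e then n - 2 else 1)" for c
  define cst where "cst = cost F R m"
  define s where "s W = (\<Sum>c\<in>F. of_bool ((c \<in> W) \<noteq> (c \<in> A)) :: nat)" for W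
  have AE: "A \<subseteq> E" and BE: "B \<subseteq> E" using AB Qdef by auto
  have DE: "D \<subseteq> E" using AE BE Dd unfolding symdiff_def by auto
  have finD: "finite D" using DE finE finite_subset by auto
  have finF: "finite F" using finE F_def by simp
  have pqE: "p \<in> E" "q \<in> E" using pq DE by auto
  have Fpq: "F \<inter> {p, q} = {}" using F_def by auto
  define X where "X = (if p \<in> A then B else A)"
  define Yf where "Yf = (if p \<in> A then A else B)"
  have XF: "X \<subseteq> F" using pq side AE BE unfolding X_def F_def Dd symdiff_def by auto
  have Xpos: "\<omega> X > 0" using AB Qdef unfolding X_def by auto
  have YF: "Yf - {p, q} \<subseteq> F" using AE BE unfolding Yf_def F_def by auto
  have Yins: "insert p (insert q (Yf - {p, q})) = Yf"
    using pq side unfolding Yf_def Dd symdiff_def by auto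
  have Ypos: "\<omega> (insert p (insert q (Yf - {p, q}))) > 0" using AB Qdef Yins unfolding Yf_def by auto
  obtain U V where UV: "U \<subseteq> F" "V \<subseteq> F" "\<omega> (insert p U) > 0" "\<omega> (insert q V) > 0"
    "cst U + cst V \<le> cst X + cst (Yf - {p, q})"
    using key[OF finE nn ray pqE pq(3) XF[unfolded F_def] Xpos YF[unfolded F_def] Ypos, of R m]
    unfolding cst_def F_def by blast
  have "cst (Yf - {p, q}) = cst Yf" unfolding cst_def using cost_minus[OF Fpq] by simp
  then have RHS: "cst U + cst V \<le> cst A + cst B" using UV(5) unfolding X_def Yf_def by (auto split: if_splits)
  have cA: "cst A = (if e \<in> F then n - 2 else 0)"
  proof -
    have "cst A = (\<Sum>c\<in>F. if c = e then m e else 0)"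
      unfolding cst_def cost_def R_def symdiff_def by (intro sum.cong) auto
    also have "\<dots> = (if e \<in> F then m e else 0)" using finF by simp
    finally show ?thesis using eD m_def by simp
  qed
  have cB: "cst B = card (D - {p, q, e})"
  proof -
    have "(if (c \<in> B) = (c \<in> R) then 0 else m c) = of_bool (c \<in> D - {e})" for c
    proof -
      have r: "c \<in> R \<longleftrightarrow> (c \<in> A) \<noteq> (c = e)" by (auto simp: R_def symdiff_def)
      have d: "c \<in> D \<longleftrightarrow> (c \<in> A) \<noteq> (c \<in> B)" by (auto simp: Dd symdiff_def)
      have d2: "(e \<in> A) \<noteq> (e \<in> B)" using eD d by (auto simp: Dd symdiff_def)
      show ?thesis
      proof (cases "c = e")
        case True
        then show ?thesis using r d2 by auto
      next
        case False
        then show ?thesis using r d by (auto simp: m_def)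
      qed
    qed
    then have "cst B = (\<Sum>c\<in>F. of_bool (c \<in> D - {e}))"
      unfolding cst_def cost_def by (intro sum.cong) auto
    also have "\<dots> = card (F \<inter> {c. c \<in> D - {e}})" using finF by simp
    also have "F \<inter> {c. c \<in> D - {e}} = D - {p, q, e}" using DE F_def by auto
    finally show ?thesis .
  qed
  have cardpqe: "card (D - {p, q, e}) = n - card {p, q, e}"
    using finD pq eD nd by (subst card_Diff_subset) auto
  have f1: "(c \<in> W) = (c \<in> A)" if "c \<in> F" "c \<notin> D" "cst W < 2 * n" for c W
  proof (rule ccontr)
    assume "(c \<in> W) \<noteq> (c \<in> A)"
    then have "(if (c \<in> W) = (c \<in> R) then 0 else m c) = 2 * n"
      using that eD unfolding R_def m_def symdiff_def by auto
    then show False using cost_nonneg_term[OF finF that(1), of W R m] that(3) cst_def by simp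
  qed
  have f2: "s W + (if e \<in> F then n - 2 else 0) \<le> cst W + (if e \<in> F then (n - 1) * of_bool ((e \<in> W) \<noteq> (e \<in> A)) else 0)" for W
  proof -
    have "(\<Sum>c\<in>F. of_bool ((c \<in> W) \<noteq> (c \<in> A)) + (if c = e then n - 2 else 0))
       \<le> (\<Sum>c\<in>F. (if (c \<in> W) = (c \<in> R) then 0 else m c) + (if c = e then (n - 1) * of_bool ((e \<in> W) \<noteq> (e \<in> A)) else 0))"
    proof (rule sum_mono)
      fix c assume "c \<in> F"
      show "of_bool ((c \<in> W) \<noteq> (c \<in> A)) + (if c = e then n - 2 else 0)
         \<le> (if (c \<in> W) = (c \<in> R) then 0 else m c) + (if c = e then (n - 1) * of_bool ((e \<in> W) \<noteq> (e \<in> A)) else 0)"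
        using n3 eD unfolding R_def m_def symdiff_def by auto
    qed
    then show ?thesis unfolding s_def cst_def cost_def using finF
      by (simp add: sum.distrib del: sum_of_bool_eq)
  qed
  have f3: "n - 2 \<le> cst W" if "e \<in> F" "(e \<in> W) = (e \<in> A)" for W
  proof -
    have "(if (e \<in> W) = (e \<in> R) then 0 else m e) = n - 2"
      using that eD unfolding R_def m_def symdiff_def by auto
    then show ?thesis using cost_nonneg_term[OF finF that(1), of W R m] cst_def by simp
  qed
  have cardU: "card (symdiff A (insert p U)) = 1 + s U"
    unfolding s_def by (rule card_symdiff_insert[OF finE F_def pqE pq(3) UV(1) AE side])
  have cardV: "card (symdiff A (insert q V)) = 1 + s V"
    unfolding s_def
    by (rule card_symdiff_insert[OF finE _ pqE(2,1) pq(3)[symmetric] UV(2) AE side[symmetric]])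
       (simp add: F_def insert_commute)
  have good: "\<exists>Z\<in>Q. (\<forall>c\<in>E - D. (c \<in> Z) = (c \<in> A)) \<and> e \<in> symdiff A Z \<and> card (symdiff A Z) < n"
    if "r \<in> {p, q}" "W \<subseteq> F" "\<omega> (insert r W) > 0" "cst W < 2 * n" "e \<in> symdiff A (insert r W)"
       "card (symdiff A (insert r W)) < n" for r W
  proof (intro bexI conjI)
    show "insert r W \<in> Q" using Qdef that(1,2,3) pqE F_def by auto
    show "\<forall>c\<in>E - D. (c \<in> insert r W) = (c \<in> A)"
    proof
      fix c assume c: "c \<in> E - D"
      then have "c \<in> F" "c \<noteq> r" using pq that(1) F_def by auto
      then show "(c \<in> insert r W) = (c \<in> A)" using f1[OF \<open>c \<in> F\<close> _ that(4)] c by auto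
    qed
  qed (use that in auto)
  show ?thesis
  proof (cases "e \<in> F")
    case False
    then have epq: "e \<in> {p, q}" using eD DE F_def by auto
    then have "card {p, q, e} = 2" using pq by (auto simp: insert_commute)
    then have R2: "cst U + cst V \<le> n - 2" using RHS cA cB cardpqe False by simp
    have sU: "s U \<le> cst U" using f2[of U] False by simp
    have "e \<in> symdiff A (insert p U)"
      using lab epq UV(1) F_def unfolding symdiff_def by auto
    moreover have "card (symdiff A (insert p U)) < n" using cardU sU R2 n3 by simp
    ultimately show ?thesis using good[of p U] UV R2 n3 by simp
  next
    case True
    then have "e \<notin> {p, q}" using F_def by auto
    then have "card {p, q, e} = 3" using pq by auto
    then have R2: "cst U + cst V \<le> 2 * n - 5" using RHS cA cB cardpqe True n3 by simp
    have U2: "cst U < 2 * n" and V2: "cst V < 2 * n" using R2 n3 by auto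
    have sU: "s U + (n - 2) \<le> cst U + (n - 1) * of_bool ((e \<in> U) \<noteq> (e \<in> A))" using f2[of U] True by simp
    have sV: "s V + (n - 2) \<le> cst V + (n - 1) * of_bool ((e \<in> V) \<noteq> (e \<in> A))" using f2[of V] True by simp
    have eU: "e \<in> symdiff A (insert p U) \<longleftrightarrow> (e \<in> U) \<noteq> (e \<in> A)"
      using \<open>e \<notin> {p, q}\<close> unfolding symdiff_def by auto
    have eV: "e \<in> symdiff A (insert q V) \<longleftrightarrow> (e \<in> V) \<noteq> (e \<in> A)"
      using \<open>e \<notin> {p, q}\<close> unfolding symdiff_def by auto
    consider "(e \<in> U) \<noteq> (e \<in> A)" "s U \<le> n - 2" | "(e \<in> V) \<noteq> (e \<in> A)" "s V \<le> n - 2"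
    proof (cases "(e \<in> U) \<noteq> (e \<in> A)"; cases "(e \<in> V) \<noteq> (e \<in> A)")
      assume a: "(e \<in> U) \<noteq> (e \<in> A)" "(e \<in> V) \<noteq> (e \<in> A)"
      then have "s U + s V \<le> 2 * n - 3" using sU sV R2 n3 by simp
      then have "s U \<le> n - 2 \<or> s V \<le> n - 2" by linarith
      then show thesis using that a by blast
    next
      assume a: "(e \<in> U) \<noteq> (e \<in> A)" "\<not> (e \<in> V) \<noteq> (e \<in> A)"
      then have "n - 2 \<le> cst V" using f3[OF True] by simp
      then have "s U \<le> n - 2" using sU R2 n3 a by simp
      then show thesis using that a by blast
    next
      assume a: "\<not> (e \<in> U) \<noteq> (e \<in> A)" "(e \<in> V) \<noteq> (e \<in> A)"
      then have "n - 2 \<le> cst U" using f3[OF True] by simp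
      then have "s V \<le> n - 2" using sV R2 n3 a by simp
      then show thesis using that a by blast
    next
      assume a: "\<not> (e \<in> U) \<noteq> (e \<in> A)" "\<not> (e \<in> V) \<noteq> (e \<in> A)"
      then have "n - 2 \<le> cst U" "n - 2 \<le> cst V" using f3[OF True] by auto
      then show thesis using R2 n3 by simp
    qed
    then show ?thesis
    proof cases
      case 1
      then show ?thesis using good[of p U] UV U2 eU cardU n3 by simp
    next
      case 2
      then show ?thesis using good[of q V] UV V2 eV cardV n3 by simp
    qed
  qed
qed



lemma step:
  assumes finE: "finite E" and nn: "\<forall>S\<in>Pow E. \<omega> S \<ge> 0" and ray: "rayleigh E \<omega>"
    and Qdef: "\<And>Z. Z \<in> Q \<longleftrightarrow> Z \<subseteq> E \<and> \<omega> Z > 0"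
  shows "S \<in> Q \<Longrightarrow> S' \<in> Q \<Longrightarrow> S \<subseteq> S' \<Longrightarrow> e \<in> S' - S \<Longrightarrow> insert e S \<in> Q"
proof (induction "card (S' - S)" arbitrary: S' rule: less_induct)
  case less
  show ?case
  proof (cases "S' = insert e S")
    case True
    then show ?thesis using less by simp
  next
    case False
    then obtain f where f: "f \<in> S' - S" "f \<noteq> e" using less.prems by blast
    have S'E: "S' \<subseteq> E" using less.prems Qdef by auto
    have pq: "e \<in> E" "f \<in> E" using f less.prems S'E by auto
    define F where "F = E - {e, f}"
    define m where "m c = (if c \<in> S' - S then 0 else 1::nat)" for c
    have finF: "finite F" using finE F_def by simp
    have XF: "S \<subseteq> E - {e, f}" using less.prems f S'E by auto
    have YF: "S' - {e, f} \<subseteq> E - {e, f}" using S'E by auto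
    have Yins: "insert e (insert f (S' - {e, f})) = S'" using less.prems f by auto
    have Xpos: "\<omega> S > 0" and Ypos: "\<omega> (insert e (insert f (S' - {e, f}))) > 0"
      using less.prems Qdef Yins by auto
    obtain U V where UV: "U \<subseteq> F" "V \<subseteq> F" "\<omega> (insert e U) > 0"
      "cost F S m U + cost F S m V \<le> cost F S m S + cost F S m (S' - {e, f})"
      using key[OF finE nn ray pq f(2)[symmetric] XF Xpos YF Ypos, of S m] unfolding F_def by blast
    have c1: "cost F S m S = 0" unfolding cost_def by simp
    have c2: "cost F S m (S' - {e, f}) = 0" unfolding cost_def using less.prems F_def
      by (intro sum.neutral) (auto simp: m_def)
    have c0: "cost F S m U = 0" using UV(4) c1 c2 by simp
    have agree: "(c \<in> U) = (c \<in> S)" if "c \<in> F" "c \<notin> S' - S" for c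
    proof (rule ccontr)
      assume "(c \<in> U) \<noteq> (c \<in> S)"
      then have "(if (c \<in> U) = (c \<in> S) then 0 else m c) = 1" using that m_def by simp
      then show False using cost_nonneg_term[OF finF that(1), of U S m] c0 by simp
    qed
    have SU: "S \<subseteq> insert e U" using agree XF F_def by auto
    have US: "insert e U \<subseteq> S'" using agree UV(1) F_def less.prems by auto
    have fU: "f \<notin> insert e U" using UV(1) F_def f by auto
    have insQ: "insert e U \<in> Q" using Qdef UV(1,3) F_def pq by auto
    have "insert e U - S \<subset> S' - S" using US fU f by auto
    then have "card (insert e U - S) < card (S' - S)"
      using S'E finE by (meson finite_Diff finite_subset psubset_card_mono)
    moreover have "e \<in> insert e U - S" using less.prems(4) by simp
    ultimately show ?thesis by (rule less.hyps[OF _ less.prems(1) insQ SU])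
  qed
qed

lemma convex_aux:
  assumes finE: "finite E" and nn: "\<forall>S\<in>Pow E. \<omega> S \<ge> 0" and ray: "rayleigh E \<omega>"
    and Qdef: "\<And>Z. Z \<in> Q \<longleftrightarrow> Z \<subseteq> E \<and> \<omega> Z > 0"
  shows "S \<in> Q \<Longrightarrow> S' \<in> Q \<Longrightarrow> S \<subseteq> T \<Longrightarrow> T \<subseteq> S' \<Longrightarrow> T \<in> Q"
proof (induction "card (T - S)" arbitrary: S rule: less_induct)
  case less
  show ?case
  proof (cases "T = S")
    case True
    then show ?thesis using less by simp
  next
    case False
    then obtain e where e: "e \<in> T - S" using less.prems by blast
    have ins: "insert e S \<in> Q"
      using step[OF finE nn ray Qdef less.prems(1,2)] e less.prems by auto
    have TE: "T \<subseteq> E" using less.prems Qdef by auto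
    have "T - insert e S \<subset> T - S" using e by auto
    then have "card (T - insert e S) < card (T - S)"
      using TE finE by (meson finite_Diff finite_subset psubset_card_mono)
    then show ?thesis using less.hyps[OF _ ins less.prems(2)] e less.prems by auto
  qed
qed

lemma symdiff_symdiff: "symdiff A (symdiff A B) = B"
  unfolding symdiff_def by auto

lemma dm_aux:
  assumes finE: "finite E" and nn: "\<forall>S\<in>Pow E. \<omega> S \<ge> 0" and ray: "rayleigh E \<omega>"
    and Qdef: "\<And>Z. Z \<in> Q \<longleftrightarrow> Z \<subseteq> E \<and> \<omega> Z > 0"
    and A: "A \<in> Q" and B0: "B0 \<in> Q" and e: "e \<in> symdiff A B0"
  shows "\<exists>f\<in>symdiff A B0. symdiff A {e, f} \<in> Q"
proof -
  define C where "C = {B \<in> Q. A \<inter> B0 \<subseteq> B \<and> B \<subseteq> A \<union> B0 \<and> e \<in> symdiff A B}"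
  have "B0 \<in> C" using B0 e unfolding C_def by auto
  then obtain B where B: "B \<in> C" and Bmin: "\<And>B'. B' \<in> C \<Longrightarrow> card (symdiff A B) \<le> card (symdiff A B')"
    using ex_has_least_nat[of "\<lambda>B. B \<in> C" B0 "\<lambda>B. card (symdiff A B)"] by blast
  define D where "D = symdiff A B"
  define n where "n = card D"
  have BQ: "B \<in> Q" and eD: "e \<in> D" using B unfolding C_def D_def by auto
  have DD0: "D \<subseteq> symdiff A B0" using B unfolding C_def D_def symdiff_def by auto
  have AE: "A \<subseteq> E" "B \<subseteq> E" using A BQ Qdef by auto
  have finD: "finite D" unfolding D_def symdiff_def using AE finE by (meson finite_Diff finite_UnI finite_subset)
  show ?thesis
  proof (cases "n \<le> 2")
    case True
    obtain f where Df: "D = {e, f}"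
    proof (cases "D = {e}")
      case True
      then show thesis using that[of e] by simp
    next
      case False
      then obtain f where f: "f \<in> D" "f \<noteq> e" using eD by blast
      have "{e, f} \<subseteq> D" using f eD by auto
      moreover have "card {e, f} = 2" using f by simp
      ultimately have "D = {e, f}" using True n_def finD
        by (metis card_subset_eq le_antisym card_mono)
      then show thesis using that by blast
    qed
    have "f \<in> symdiff A B0" using Df DD0 by auto
    moreover have "symdiff A {e, f} = B" using Df D_def symdiff_symdiff by metis
    ultimately show ?thesis using BQ by blast
  next
    case False
    then have n3: "n \<ge> 3" by simp
    have "\<exists>p q. p \<in> D \<and> q \<in> D \<and> p \<noteq> q \<and> (p \<in> A) = (q \<in> A) \<and> (e \<in> {p, q} \<longrightarrow> (p = e \<longleftrightarrow> e \<notin> A))"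
    proof (cases "\<exists>g\<in>D. g \<noteq> e \<and> (g \<in> A) = (e \<in> A)")
      case True
      then obtain g where g: "g \<in> D" "g \<noteq> e" "(g \<in> A) = (e \<in> A)" by blast
      show ?thesis
      proof (cases "e \<in> A")
        case True
        then show ?thesis using g eD by (intro exI[of _ g] exI[of _ e]) auto
      next
        case False
        then show ?thesis using g eD by (intro exI[of _ e] exI[of _ g]) auto
      qed
    next
      case False
      then have opp: "\<And>g. g \<in> D - {e} \<Longrightarrow> (g \<in> A) \<noteq> (e \<in> A)" by blast
      have "card (D - {e}) \<ge> 2" using n3 n_def eD finD by simp
      then have "\<not> card (D - {e}) \<le> Suc 0" by simp
      then have "\<not> (\<forall>a\<in>D - {e}. \<forall>b\<in>D - {e}. a = b)"
        using card_le_Suc0_iff_eq[of "D - {e}"] finD by simp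
      then obtain g h where gh: "g \<in> D - {e}" "h \<in> D - {e}" "g \<noteq> h" by blast
      have gA: "(g \<in> A) = (h \<in> A)" using opp[OF gh(1)] opp[OF gh(2)] by blast
      have "e \<notin> {g, h}" using gh by blast
      then show ?thesis using gh gA by blast
    qed
    then obtain p q where pq: "p \<in> D" "q \<in> D" "p \<noteq> q" "(p \<in> A) = (q \<in> A)"
      "e \<in> {p, q} \<longrightarrow> (p = e \<longleftrightarrow> e \<notin> A)" by blast
    obtain Z where Z: "Z \<in> Q" "\<forall>c\<in>E - D. (c \<in> Z) = (c \<in> A)" "e \<in> symdiff A Z" "card (symdiff A Z) < n"
      using reduce[OF finE nn ray Qdef A BQ D_def n_def n3 eD pq] by blast
    have ZE: "Z \<subseteq> E" using Z(1) Qdef by auto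
    have "Z \<in> C"
      unfolding C_def using Z(1,3) Z(2) ZE AE DD0 unfolding symdiff_def by blast
    then have "n \<le> card (symdiff A Z)" using Bmin n_def D_def by simp
    then show ?thesis using Z(4) by simp
  qed
qed

theorem theorem4p6:
  fixes E :: "'a set" and Q :: "'a set set"
  assumes "finite E"
    and "Q \<subseteq> Pow E"
    and "weakly_rayleigh E Q"
  shows "convex_setsystem Q \<and> delta_matroid Q"
proof -
  obtain \<omega> where nn: "\<forall>S\<in>Pow E. \<omega> S \<ge> 0" and sup: "support E \<omega> = Q" and ray: "rayleigh E \<omega>"
    using assms(3) unfolding weakly_rayleigh_def by blast
  have Qdef: "Z \<in> Q \<longleftrightarrow> Z \<subseteq> E \<and> \<omega> Z > 0" for Z
    using sup unfolding support_def by auto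
  show ?thesis
    unfolding convex_setsystem_def delta_matroid_def
    using convex_aux[OF assms(1) nn ray Qdef] dm_aux[OF assms(1) nn ray Qdef] by blast
qed


end
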